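(* Let $G$ be a countable discrete group acting by homeomorphisms on a compact Hausdorff space $X$, and suppose that for every $a\in C(X)\rtimes_\lambda G$ with $\mathbb{E}(a)=0$ we have $0\in\overline{\{\mu a:\mu\in P_f(G,C(X))\}}$. Then for any $a_1,\dots,a_n\in C(X)\rtimes_\lambda G$ with $\mathbb{E}(a_i)=0$ for all $i$ and any $\varepsilon>0$, there is $\mu\in P(G,C(X))$ with $\|\mu a_i\|<\varepsilon$ for all $i=1,\dots,n$.
   Context: $(g\cdot f)(x)=f(g^{-1}x)$. $C(X)\rtimes_\lambda G$ is the reduced crossed product with canonical unitaries $\lambda_t$, $\lambda_tf\lambda_t^*=t\cdot f$; $G$ acts on it by $t\cdot a=\lambda_ta\lambda_t^*$; $\mathbb{E}(f\lambda_t)=f$ if $t=e$, $0$ otherwise. A generalized $(G,C(X))$-probability measure is a formal sum $\mu=\sum_{i\in I}f_is_if_i$ with $I$ an index set, $s_i\in G$ (repetitions allowed), $f_i\in C(X)$, $f_i\ge0$, $f_i\ne0$, $\sum_if_i^2=1$; $P(G,C(X))$ is the set of these and $P_f(G,C(X))$ those with $I$ finite; $\mu a=\sum_if_i(s_i\cdot a)f_i$. Products of generalized measures are composed so that $(\mu_1\mu_2)a=\mu_1(\mu_2a)$. *)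

theory Defs
  imports "HOL-Analysis.Analysis" "HOL-Algebra.Group"
begin

text \<open>An element a is represented by its Fourier coefficients
a s = E(a \<lambda>_s^*) \<in> C(X), i.e. a = \<Sum>_s (a s) \<lambda>_s.
The norm is the norm in the faithful representation \<oplus>_{x\<in>X} \<pi>_x on
\<oplus>_x l2(G), where (\<pi>_x(f)\<xi>)(r) = f(r.x)\<xi>(r) and (\<pi>_x(\<lambda>_t)\<xi>)(r) = \<xi>(t^-1 r);
it is computed as a supremum over finitely supported unit vectors \<xi>
and finite sets R of coordinates.\<close>

definition cp_norm :: "('g, 'm) monoid_scheme \<Rightarrow> ('g \<Rightarrow> 'x \<Rightarrow> 'x) \<Rightarrow> ('g \<Rightarrow> 'x \<Rightarrow> complex) \<Rightarrow> real" where
  "cp_norm G act a = Sup {sqrt (\<Sum>r\<in>R. (cmod (\<Sum>t\<in>F. \<xi> t * a (r \<otimes>\<^bsub>G\<^esub> inv\<^bsub>G\<^esub> t) (act r x)))\<^sup>2)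
      | x F \<xi> R. finite F \<and> F \<subseteq> carrier G \<and> (\<Sum>t\<in>F. (cmod (\<xi> t))\<^sup>2) \<le> 1
                  \<and> finite R \<and> R \<subseteq> carrier G}"

definition cp_fin :: "('g, 'm) monoid_scheme \<Rightarrow> ('g \<Rightarrow> 'x::topological_space \<Rightarrow> complex) \<Rightarrow> bool" where
  "cp_fin G a \<longleftrightarrow> finite {s. a s \<noteq> (\<lambda>_. 0)} \<and> (\<forall>s. continuous_on UNIV (a s))
                 \<and> (\<forall>s. s \<notin> carrier G \<longrightarrow> a s = (\<lambda>_. 0))"

definition crossed_product :: "('g, 'm) monoid_scheme \<Rightarrow> ('g \<Rightarrow> 'x::topological_space \<Rightarrow> 'x)
    \<Rightarrow> ('g \<Rightarrow> 'x \<Rightarrow> complex) set" where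
  "crossed_product G act = {a. (\<forall>s. s \<notin> carrier G \<longrightarrow> a s = (\<lambda>_. 0)) \<and>
      (\<exists>b. (\<forall>n. cp_fin G (b n)) \<and> (\<lambda>n. cp_norm G act (\<lambda>s y. a s y - b n s y)) \<longlonglongrightarrow> 0)}"

definition cp_E :: "('g, 'm) monoid_scheme \<Rightarrow> ('g \<Rightarrow> 'x \<Rightarrow> complex) \<Rightarrow> ('g \<Rightarrow> 'x \<Rightarrow> complex)" where
  "cp_E G a = (\<lambda>s. if s = \<one>\<^bsub>G\<^esub> then a \<one>\<^bsub>G\<^esub> else (\<lambda>_. 0))"

text \<open>Generalized (G,C(X))-probability measure \<Sum>_{i\<in>I} f_i s_i f_i.\<close>
definition gen_prob :: "('g, 'm) monoid_scheme \<Rightarrow> 'i set \<Rightarrow> ('i \<Rightarrow> 'g) \<Rightarrow> ('i \<Rightarrow> 'x::topological_space \<Rightarrow> real) \<Rightarrow> bool" where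
  "gen_prob G I s f \<longleftrightarrow>
     (\<forall>i\<in>I. s i \<in> carrier G \<and> continuous_on UNIV (f i) \<and> (\<forall>x. f i x \<ge> 0) \<and> f i \<noteq> (\<lambda>_. 0))
     \<and> (\<forall>x. ((\<lambda>i. (f i x)\<^sup>2) has_sum 1) I)"

definition gen_prob_fin :: "('g, 'm) monoid_scheme \<Rightarrow> 'i set \<Rightarrow> ('i \<Rightarrow> 'g) \<Rightarrow> ('i \<Rightarrow> 'x::topological_space \<Rightarrow> real) \<Rightarrow> bool" where
  "gen_prob_fin G I s f \<longleftrightarrow> gen_prob G I s f \<and> finite I"

text \<open>\<mu> a = \<Sum>_i f_i (s_i . a) f_i, where s.a = \<lambda>_s a \<lambda>_s^*, computed coefficientwise:
(\<mu> a)_u (x) = \<Sum>_i f_i(x) a_{s_i^-1 u s_i}(s_i^-1 x) f_i(u^-1 x), using (s.f)(x) = f(s^-1 x).\<close>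
definition gen_apply :: "('g, 'm) monoid_scheme \<Rightarrow> ('g \<Rightarrow> 'x \<Rightarrow> 'x) \<Rightarrow> 'i set \<Rightarrow> ('i \<Rightarrow> 'g) \<Rightarrow> ('i \<Rightarrow> 'x \<Rightarrow> real)
    \<Rightarrow> ('g \<Rightarrow> 'x \<Rightarrow> complex) \<Rightarrow> ('g \<Rightarrow> 'x \<Rightarrow> complex)" where
  "gen_apply G act I s f a = (\<lambda>u x. if u \<in> carrier G then
      infsum (\<lambda>i. complex_of_real (f i x)
                 * a (inv\<^bsub>G\<^esub> (s i) \<otimes>\<^bsub>G\<^esub> u \<otimes>\<^bsub>G\<^esub> s i) (act (inv\<^bsub>G\<^esub> (s i)) x)
                 * complex_of_real (f i (act (inv\<^bsub>G\<^esub> u) x))) I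
    else 0)"

end

theory Submission
  imports Defs
begin


locale cpset = group G for G :: "'g monoid" (structure) +
  fixes act :: "'g \<Rightarrow> 'x::topological_space \<Rightarrow> 'x"
  assumes act_one: "act \<one> = id"
    and act_mult: "\<forall>s\<in>carrier G. \<forall>t\<in>carrier G. act (s \<otimes> t) = act s \<circ> act t"
    and act_homeo: "\<forall>s\<in>carrier G. homeomorphism UNIV UNIV (act s) (act (inv s))"
begin

lemma actm: "s \<in> carrier G \<Longrightarrow> t \<in> carrier G \<Longrightarrow> act s (act t y) = act (s \<otimes> t) y"
  using act_mult by auto

lemma act_cont: "s \<in> carrier G \<Longrightarrow> continuous_on UNIV (act s)"
  using act_homeo homeomorphism_def by blast

definition P :: "('g \<Rightarrow> 'x \<Rightarrow> complex) \<Rightarrow> 'x \<Rightarrow> 'g set \<Rightarrow> ('g \<Rightarrow> complex) \<Rightarrow> 'g \<Rightarrow> complex" where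
  "P a x F \<xi> r = (\<Sum>t\<in>F. \<xi> t * a (r \<otimes> inv t) (act r x))"

definition Qn :: "('g \<Rightarrow> 'x \<Rightarrow> complex) \<Rightarrow> 'x \<Rightarrow> 'g set \<Rightarrow> ('g \<Rightarrow> complex) \<Rightarrow> 'g set \<Rightarrow> real" where
  "Qn a x F \<xi> R = L2_set (\<lambda>r. cmod (P a x F \<xi> r)) R"

definition adm :: "'g set \<Rightarrow> ('g \<Rightarrow> complex) \<Rightarrow> 'g set \<Rightarrow> bool" where
  "adm F \<xi> R \<longleftrightarrow> finite F \<and> F \<subseteq> carrier G \<and> (\<Sum>t\<in>F. (cmod (\<xi> t))\<^sup>2) \<le> 1 \<and> finite R \<and> R \<subseteq> carrier G"

definition bnd :: "('g \<Rightarrow> 'x \<Rightarrow> complex) \<Rightarrow> real \<Rightarrow> bool" where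
  "bnd a B \<longleftrightarrow> (\<forall>x F \<xi> R. adm F \<xi> R \<longrightarrow> Qn a x F \<xi> R \<le> B)"

definition bounded' :: "('g \<Rightarrow> 'x \<Rightarrow> complex) \<Rightarrow> bool" where
  "bounded' a \<longleftrightarrow> (\<exists>B. bnd a B)"

definition Sset :: "('g \<Rightarrow> 'x \<Rightarrow> complex) \<Rightarrow> real set" where
  "Sset a = {Qn a x F \<xi> R | x F \<xi> R. adm F \<xi> R}"

lemma cp_norm_Sset: "cp_norm G act a = Sup (Sset a)"
  unfolding cp_norm_def Sset_def Qn_def L2_set_def P_def adm_def by simp

lemma adm_empty: "adm {} \<xi> {}"
  unfolding adm_def by auto

lemma Sset_ne: "Qn a x {} \<xi> {} \<in> Sset a"
  unfolding Sset_def using adm_empty by blast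

lemma Qn_empty: "Qn a x {} \<xi> R = 0"
  unfolding Qn_def P_def L2_set_def by simp

lemma bnd_nonneg: "bnd a B \<Longrightarrow> 0 \<le> B"
  unfolding bnd_def using Qn_empty[of a] adm_def by (metis empty_subsetI finite.emptyI sum.empty zero_le_one)

lemma bdd_iff: "bdd_above (Sset a) \<longleftrightarrow> bounded' a"
  unfolding bdd_above_def bounded'_def bnd_def Sset_def by blast

lemma cp_norm_le: "bnd a B \<Longrightarrow> cp_norm G act a \<le> B"
  unfolding cp_norm_Sset
proof (rule cSup_least)
  show "Sset a \<noteq> {}" using Sset_ne by blast
qed (auto simp: Sset_def bnd_def)

lemma bnd_cp_norm: "bounded' a \<Longrightarrow> bnd a (cp_norm G act a)"
  unfolding cp_norm_Sset bnd_def
  by (auto intro!: cSup_upper simp: bdd_iff) (auto simp: Sset_def)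

lemma bnd_mono: "bnd a B \<Longrightarrow> B \<le> B' \<Longrightarrow> bnd a B'"
  unfolding bnd_def by (meson order_trans)

lemma Sup_unb: "\<not> bdd_above (X::real set) \<Longrightarrow> Sup X = Sup (UNIV::real set)"
proof -
  assume "\<not> bdd_above X"
  then have "(\<lambda>z. \<forall>x\<in>X. x \<le> z) = (\<lambda>z. \<forall>x\<in>(UNIV::real set). x \<le> z)"
    by (auto simp: bdd_above_def) (meson gt_ex not_le)
  then show ?thesis unfolding Sup_real_def by simp
qed

lemma cp_norm_unb: "\<not> bounded' a \<Longrightarrow> cp_norm G act a = Sup (UNIV::real set)"
  unfolding cp_norm_Sset by (rule Sup_unb) (simp add: bdd_iff)

lemma P_add: "P (\<lambda>u y. p u y + q u y) x F \<xi> r = P p x F \<xi> r + P q x F \<xi> r"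
  unfolding P_def by (simp add: sum.distrib distrib_left)

lemma P_scale: "P (\<lambda>u y. c * p u y) x F \<xi> r = c * P p x F \<xi> r"
  unfolding P_def by (simp add: sum_distrib_left mult_ac)

lemma Qn_add: "Qn (\<lambda>u y. p u y + q u y) x F \<xi> R \<le> Qn p x F \<xi> R + Qn q x F \<xi> R"
proof -
  have "Qn (\<lambda>u y. p u y + q u y) x F \<xi> R \<le> L2_set (\<lambda>r. cmod (P p x F \<xi> r) + cmod (P q x F \<xi> r)) R"
    unfolding Qn_def P_add by (rule L2_set_mono) (auto intro: norm_triangle_ineq)
  also have "\<dots> \<le> Qn p x F \<xi> R + Qn q x F \<xi> R"
    unfolding Qn_def by (rule L2_set_triangle_ineq)
  finally show ?thesis .
qed

lemma Qn_scale: "Qn (\<lambda>u y. c * p u y) x F \<xi> R = cmod c * Qn p x F \<xi> R"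
  unfolding Qn_def P_scale by (simp add: L2_set_right_distrib norm_mult)

lemma bnd_lin: "bnd p B1 \<Longrightarrow> bnd q B2 \<Longrightarrow> bnd (\<lambda>u y. c1 * p u y + c2 * q u y) (cmod c1 * B1 + cmod c2 * B2)"
  unfolding bnd_def
proof (intro allI impI)
  fix x F \<xi> R assume p: "\<forall>x F \<xi> R. adm F \<xi> R \<longrightarrow> Qn p x F \<xi> R \<le> B1"
    and q: "\<forall>x F \<xi> R. adm F \<xi> R \<longrightarrow> Qn q x F \<xi> R \<le> B2" and a: "adm F \<xi> R"
  have "Qn (\<lambda>u y. c1 * p u y + c2 * q u y) x F \<xi> R \<le> Qn (\<lambda>u y. c1 * p u y) x F \<xi> R + Qn (\<lambda>u y. c2 * q u y) x F \<xi> R"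
    by (rule Qn_add)
  also have "\<dots> \<le> cmod c1 * B1 + cmod c2 * B2"
    unfolding Qn_scale using p q a by (intro add_mono mult_left_mono) auto
  finally show "Qn (\<lambda>u y. c1 * p u y + c2 * q u y) x F \<xi> R \<le> cmod c1 * B1 + cmod c2 * B2" .
qed

end


context cpset begin

lemma g1: "s \<in> carrier G \<Longrightarrow> r \<in> carrier G \<Longrightarrow> t \<in> carrier G \<Longrightarrow>
  (inv s \<otimes> r) \<otimes> inv (inv s \<otimes> t) = inv s \<otimes> (r \<otimes> inv t) \<otimes> s"
  by (simp add: inv_mult_group m_assoc)

lemma g2: "s \<in> carrier G \<Longrightarrow> t \<in> carrier G \<Longrightarrow> s \<otimes> (inv s \<otimes> t) = t"
  by (simp add: m_assoc[symmetric])

lemma g3: "r \<in> carrier G \<Longrightarrow> t \<in> carrier G \<Longrightarrow> inv (r \<otimes> inv t) \<otimes> r = t"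
  by (simp add: inv_mult_group m_assoc)

lemma L2sq: "(L2_set g A)\<^sup>2 = (\<Sum>i\<in>A. (g i)\<^sup>2)"
  unfolding L2_set_def by (simp add: sum_nonneg)

lemma bnd_hom:
  assumes b: "bnd a B" and F: "finite F" "F \<subseteq> carrier G" and R: "finite R" "R \<subseteq> carrier G"
  shows "Qn a x F \<xi> R \<le> B * sqrt (\<Sum>t\<in>F. (cmod (\<xi> t))\<^sup>2)"
proof -
  define N where "N = sqrt (\<Sum>t\<in>F. (cmod (\<xi> t))\<^sup>2)"
  have B0: "0 \<le> B" using bnd_nonneg[OF b] .
  show ?thesis
  proof (cases "N = 0")
    case True
    then have "(\<Sum>t\<in>F. (cmod (\<xi> t))\<^sup>2) = 0" unfolding N_def by simp
    then have "\<forall>t\<in>F. \<xi> t = 0" using F by (simp add: sum_nonneg_eq_0_iff)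
    then have "\<And>r. P a x F \<xi> r = 0" unfolding P_def by simp
    then have "Qn a x F \<xi> R = 0" unfolding Qn_def L2_set_def by simp
    then show ?thesis using B0 by (simp add: N_def sum_nonneg)
  next
    case False
    have "0 \<le> N" unfolding N_def by (simp add: sum_nonneg)
    with False have N0: "N > 0" by simp
    define c where "c = complex_of_real (1 / N)"
    have "(\<Sum>t\<in>F. (cmod (\<xi> t * c))\<^sup>2) = (\<Sum>t\<in>F. (cmod (\<xi> t))\<^sup>2) / N\<^sup>2"
      unfolding c_def using N0 by (simp add: norm_divide power_divide sum_divide_distrib)
    also have "\<dots> = 1" using N0 unfolding N_def by (simp add: sum_nonneg)
    finally have "adm F (\<lambda>t. \<xi> t * c) R" using F R by (simp add: adm_def)
    then have le: "Qn a x F (\<lambda>t. \<xi> t * c) R \<le> B" using b by (simp add: bnd_def)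
    have "\<And>r. P a x F (\<lambda>t. \<xi> t * c) r = c * P a x F \<xi> r"
      unfolding P_def by (simp add: sum_distrib_left mult_ac)
    moreover have cc: "cmod c = 1 / N" unfolding c_def using N0 by (simp add: norm_divide)
    ultimately have h: "Qn a x F (\<lambda>t. \<xi> t * c) R = Qn a x F \<xi> R * (1 / N)"
      unfolding Qn_def using N0 by (subst L2_set_left_distrib) (auto simp: norm_mult cc mult.commute)
    have "N * (Qn a x F \<xi> R * (1 / N)) = Qn a x F \<xi> R" using N0 by simp
    then have "Qn a x F \<xi> R = N * Qn a x F (\<lambda>t. \<xi> t * c) R" unfolding h by simp
    also have "\<dots> \<le> N * B" by (rule mult_left_mono[OF le]) (use N0 in simp)
    finally have "Qn a x F \<xi> R \<le> B * N" by (simp add: mult.commute)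
    then show ?thesis by (simp add: N_def)
  qed
qed

lemma gp_sum1: "gen_prob G I s f \<Longrightarrow> finite I \<Longrightarrow> (\<Sum>i\<in>I. (f i y)\<^sup>2) = 1"
  unfolding gen_prob_def using has_sum_unique has_sum_finite by blast

lemma contr:
  assumes gp: "gen_prob G I s f" and fI: "finite I" and b: "bnd a B"
  shows "bnd (gen_apply G act I s f a) B"
  unfolding bnd_def
proof (intro allI impI)
  fix x F \<xi> R assume ad: "adm F \<xi> R"
  then have F: "finite F" "F \<subseteq> carrier G" and R: "finite R" "R \<subseteq> carrier G"
    and xi: "(\<Sum>t\<in>F. (cmod (\<xi> t))\<^sup>2) \<le> 1" by (auto simp: adm_def)
  have B0: "0 \<le> B" using bnd_nonneg[OF b] .
  have sI: "\<And>i. i \<in> I \<Longrightarrow> s i \<in> carrier G" and fnn: "\<And>i y. i \<in> I \<Longrightarrow> f i y \<ge> 0"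
    using gp by (auto simp: gen_prob_def)
  have sq1: "\<And>y. (\<Sum>i\<in>I. (f i y)\<^sup>2) = 1" using gp_sum1[OF gp fI] .
  define \<eta> where "\<eta> i t' = \<xi> (s i \<otimes> t') * complex_of_real (f i (act (s i \<otimes> t') x))" for i t'
  define Fi where "Fi i = (\<lambda>t. inv (s i) \<otimes> t) ` F" for i
  define Ri where "Ri i = (\<lambda>t. inv (s i) \<otimes> t) ` R" for i
  let ?m = "gen_apply G act I s f a"
  let ?c = "\<lambda>i r. P a x (Fi i) (\<eta> i) (inv (s i) \<otimes> r)"
  have Vr: "P ?m x F \<xi> r = (\<Sum>i\<in>I. complex_of_real (f i (act r x)) * ?c i r)" if r: "r \<in> carrier G" for r
  proof -
    have "P ?m x F \<xi> r = (\<Sum>t\<in>F. \<Sum>i\<in>I. complex_of_real (f i (act r x)) *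
        (\<xi> t * complex_of_real (f i (act t x)) * a (inv (s i) \<otimes> (r \<otimes> inv t) \<otimes> s i) (act (inv (s i) \<otimes> r) x)))"
      unfolding P_def gen_apply_def infsum_finite[OF fI]
    proof (rule sum.cong[OF refl])
      fix t assume t: "t \<in> F"
      with F r have tc: "t \<in> carrier G" "r \<otimes> inv t \<in> carrier G" by auto
      have "\<And>i. i \<in> I \<Longrightarrow> act (inv (s i)) (act r x) = act (inv (s i) \<otimes> r) x"
        using sI r by (simp add: actm)
      moreover have "act (inv (r \<otimes> inv t)) (act r x) = act t x"
        using tc r by (simp add: actm g3)
      ultimately show "\<xi> t * (if r \<otimes> inv t \<in> carrier G then \<Sum>i\<in>I. complex_of_real (f i (act r x)) *
             a (inv (s i) \<otimes> (r \<otimes> inv t) \<otimes> s i) (act (inv (s i)) (act r x)) *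
             complex_of_real (f i (act (inv (r \<otimes> inv t)) (act r x))) else 0) =
         (\<Sum>i\<in>I. complex_of_real (f i (act r x)) *
             (\<xi> t * complex_of_real (f i (act t x)) * a (inv (s i) \<otimes> (r \<otimes> inv t) \<otimes> s i) (act (inv (s i) \<otimes> r) x)))"
        using tc fI by (simp add: sum_distrib_left mult_ac)
    qed
    also have "\<dots> = (\<Sum>i\<in>I. complex_of_real (f i (act r x)) * ?c i r)"
    proof (subst sum.swap, rule sum.cong[OF refl])
      fix i assume i: "i \<in> I"
      have inj: "inj_on (\<lambda>t. inv (s i) \<otimes> t) F" using F sI[OF i] by (auto simp: inj_on_def) (metis g2 subsetD)
      have "?c i r = (\<Sum>t\<in>F. \<eta> i (inv (s i) \<otimes> t) * a ((inv (s i) \<otimes> r) \<otimes> inv (inv (s i) \<otimes> t)) (act (inv (s i) \<otimes> r) x))"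
        unfolding P_def Fi_def sum.reindex[OF inj] by (simp add: o_def)
      also have "\<dots> = (\<Sum>t\<in>F. \<xi> t * complex_of_real (f i (act t x)) * a (inv (s i) \<otimes> (r \<otimes> inv t) \<otimes> s i) (act (inv (s i) \<otimes> r) x))"
        using F sI[OF i] r by (intro sum.cong refl) (auto simp: \<eta>_def g1 g2 subsetD)
      finally show "(\<Sum>t\<in>F. complex_of_real (f i (act r x)) *
          (\<xi> t * complex_of_real (f i (act t x)) * a (inv (s i) \<otimes> (r \<otimes> inv t) \<otimes> s i) (act (inv (s i) \<otimes> r) x))) =
        complex_of_real (f i (act r x)) * ?c i r"
        by (simp add: sum_distrib_left)
    qed
    finally show ?thesis .
  qed
  have pt: "(cmod (P ?m x F \<xi> r))\<^sup>2 \<le> (\<Sum>i\<in>I. (cmod (?c i r))\<^sup>2)" if r: "r \<in> carrier G" for r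
  proof -
    have "cmod (P ?m x F \<xi> r) \<le> (\<Sum>i\<in>I. f i (act r x) * cmod (?c i r))"
      unfolding Vr[OF r] by (rule order_trans[OF norm_sum]) (simp add: norm_mult fnn)
    then have "(cmod (P ?m x F \<xi> r))\<^sup>2 \<le> (\<Sum>i\<in>I. f i (act r x) * cmod (?c i r))\<^sup>2"
      by (intro power_mono) auto
    also have "\<dots> \<le> (\<Sum>i\<in>I. (f i (act r x))\<^sup>2) * (\<Sum>i\<in>I. (cmod (?c i r))\<^sup>2)"
      by (rule Cauchy_Schwarz_ineq_sum)
    finally show ?thesis using sq1 by simp
  qed
  have "(Qn ?m x F \<xi> R)\<^sup>2 = (\<Sum>r\<in>R. (cmod (P ?m x F \<xi> r))\<^sup>2)"
    unfolding Qn_def L2sq ..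
  also have "\<dots> \<le> (\<Sum>r\<in>R. \<Sum>i\<in>I. (cmod (?c i r))\<^sup>2)"
    using R pt by (intro sum_mono) auto
  also have "\<dots> = (\<Sum>i\<in>I. (Qn a x (Fi i) (\<eta> i) (Ri i))\<^sup>2)"
  proof (subst sum.swap, rule sum.cong[OF refl])
    fix i assume i: "i \<in> I"
    have inj: "inj_on (\<lambda>t. inv (s i) \<otimes> t) R" using R sI[OF i] by (auto simp: inj_on_def) (metis g2 subsetD)
    show "(\<Sum>r\<in>R. (cmod (?c i r))\<^sup>2) = (Qn a x (Fi i) (\<eta> i) (Ri i))\<^sup>2"
      unfolding Qn_def L2sq Ri_def sum.reindex[OF inj] by (simp add: o_def)
  qed
  also have "\<dots> \<le> (\<Sum>i\<in>I. (B * sqrt (\<Sum>t\<in>Fi i. (cmod (\<eta> i t))\<^sup>2))\<^sup>2)"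
  proof (rule sum_mono)
    fix i assume i: "i \<in> I"
    have "Qn a x (Fi i) (\<eta> i) (Ri i) \<le> B * sqrt (\<Sum>t\<in>Fi i. (cmod (\<eta> i t))\<^sup>2)"
      using F R sI[OF i] by (intro bnd_hom[OF b]) (auto simp: Fi_def Ri_def)
    then show "(Qn a x (Fi i) (\<eta> i) (Ri i))\<^sup>2 \<le> (B * sqrt (\<Sum>t\<in>Fi i. (cmod (\<eta> i t))\<^sup>2))\<^sup>2"
      by (intro power_mono) (auto simp: Qn_def)
  qed
  also have "\<dots> = B\<^sup>2 * (\<Sum>i\<in>I. \<Sum>t\<in>F. (cmod (\<xi> t))\<^sup>2 * (f i (act t x))\<^sup>2)"
  proof (subst sum_distrib_left, rule sum.cong[OF refl])
    fix i assume i: "i \<in> I"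
    have inj: "inj_on (\<lambda>t. inv (s i) \<otimes> t) F" using F sI[OF i] by (auto simp: inj_on_def) (metis g2 subsetD)
    have "(\<Sum>t\<in>Fi i. (cmod (\<eta> i t))\<^sup>2) = (\<Sum>t\<in>F. (cmod (\<xi> t))\<^sup>2 * (f i (act t x))\<^sup>2)"
      unfolding Fi_def sum.reindex[OF inj] using F sI[OF i]
      by (intro sum.cong refl) (auto simp: \<eta>_def g2 subsetD norm_mult power_mult_distrib)
    then show "(B * sqrt (\<Sum>t\<in>Fi i. (cmod (\<eta> i t))\<^sup>2))\<^sup>2 = B\<^sup>2 * (\<Sum>t\<in>F. (cmod (\<xi> t))\<^sup>2 * (f i (act t x))\<^sup>2)"
      by (simp add: power_mult_distrib sum_nonneg)
  qed
  also have "\<dots> = B\<^sup>2 * (\<Sum>t\<in>F. (cmod (\<xi> t))\<^sup>2)"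
  proof -
    have "(\<Sum>i\<in>I. \<Sum>t\<in>F. (cmod (\<xi> t))\<^sup>2 * (f i (act t x))\<^sup>2)
        = (\<Sum>t\<in>F. \<Sum>i\<in>I. (cmod (\<xi> t))\<^sup>2 * (f i (act t x))\<^sup>2)" by (rule sum.swap)
    also have "\<dots> = (\<Sum>t\<in>F. (cmod (\<xi> t))\<^sup>2 * (\<Sum>i\<in>I. (f i (act t x))\<^sup>2))"
      by (simp only: sum_distrib_left)
    also have "\<dots> = (\<Sum>t\<in>F. (cmod (\<xi> t))\<^sup>2)" using sq1 by simp
    finally show ?thesis by simp
  qed
  also have "\<dots> \<le> B\<^sup>2" by (rule mult_left_le[OF xi]) simp
  finally have "(Qn ?m x F \<xi> R)\<^sup>2 \<le> B\<^sup>2" .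
  then show "Qn ?m x F \<xi> R \<le> B" using B0 by (rule power2_le_imp_le)
qed

end


context cpset begin

lemma bnd_zero: "bnd (\<lambda>u y. 0) 0"
  unfolding bnd_def Qn_def P_def L2_set_def by simp

lemma bnd_add: "bnd p B1 \<Longrightarrow> bnd q B2 \<Longrightarrow> bnd (\<lambda>u y. p u y + q u y) (B1 + B2)"
  using bnd_lin[of p B1 q B2 1 1] by simp

lemma bnd_sum: "finite K \<Longrightarrow> (\<And>k. k \<in> K \<Longrightarrow> bnd (g k) (M k)) \<Longrightarrow> bnd (\<lambda>u y. \<Sum>k\<in>K. g k u y) (\<Sum>k\<in>K. M k)"
proof (induction K rule: finite_induct)
  case empty then show ?case using bnd_zero by simp
next
  case (insert k K)
  then have "bnd (\<lambda>u y. g k u y + (\<Sum>k\<in>K. g k u y)) (M k + (\<Sum>k\<in>K. M k))"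
    by (intro bnd_add) auto
  then show ?case using insert by simp
qed

lemma single_bnd:
  assumes M: "\<And>y. cmod (g y) \<le> M" and s: "s \<in> carrier G"
  shows "bnd (\<lambda>u y. if u = s then g y else 0) M"
  unfolding bnd_def
proof (intro allI impI)
  fix x F \<xi> R assume ad: "adm F \<xi> R"
  then have F: "finite F" "F \<subseteq> carrier G" and R: "finite R" "R \<subseteq> carrier G"
    and xi: "(\<Sum>t\<in>F. (cmod (\<xi> t))\<^sup>2) \<le> 1" by (auto simp: adm_def)
  have M0: "0 \<le> M" using M[of undefined] norm_ge_zero order_trans by blast
  let ?g = "\<lambda>u y. if u = s then g y else 0"
  have Pr: "P ?g x F \<xi> r = (if inv s \<otimes> r \<in> F then \<xi> (inv s \<otimes> r) * g (act r x) else 0)"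
    if r: "r \<in> carrier G" for r
  proof -
    have "P ?g x F \<xi> r = (\<Sum>t\<in>F. if inv s \<otimes> r = t then \<xi> t * g (act r x) else 0)"
      unfolding P_def
    proof (rule sum.cong[OF refl])
      fix t assume t: "t \<in> F"
      then have tc: "t \<in> carrier G" using F by auto
      have "(r \<otimes> inv t = s) \<longleftrightarrow> (inv s \<otimes> r = t)"
      proof
        assume "r \<otimes> inv t = s"
        then have "inv s \<otimes> r = inv (r \<otimes> inv t) \<otimes> r" by simp
        then show "inv s \<otimes> r = t" using g3 r tc by simp
      next
        assume "inv s \<otimes> r = t"
        then show "r \<otimes> inv t = s" using r s by (auto simp: inv_mult_group m_assoc[symmetric])
      qed
      then show "\<xi> t * (if r \<otimes> inv t = s then g (act r x) else 0) = (if inv s \<otimes> r = t then \<xi> t * g (act r x) else 0)"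
        by simp
    qed
    also have "\<dots> = (if inv s \<otimes> r \<in> F then \<xi> (inv s \<otimes> r) * g (act r x) else 0)"
      using F by simp
    finally show ?thesis .
  qed
  define h where "h t = (cmod (\<xi> t))\<^sup>2" for t
  define R' where "R' = {r \<in> R. inv s \<otimes> r \<in> F}"
  have inj: "inj_on (\<lambda>r. inv s \<otimes> r) R'" using R s by (auto simp: inj_on_def R'_def) (metis g2 subsetD)
  have "(Qn ?g x F \<xi> R)\<^sup>2 = (\<Sum>r\<in>R. (cmod (P ?g x F \<xi> r))\<^sup>2)" unfolding Qn_def L2sq ..
  also have "\<dots> \<le> (\<Sum>r\<in>R. M\<^sup>2 * (if inv s \<otimes> r \<in> F then h (inv s \<otimes> r) else 0))"
  proof (rule sum_mono)
    fix r assume r: "r \<in> R"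
    then have rc: "r \<in> carrier G" using R by auto
    show "(cmod (P ?g x F \<xi> r))\<^sup>2 \<le> M\<^sup>2 * (if inv s \<otimes> r \<in> F then h (inv s \<otimes> r) else 0)"
    proof (cases "inv s \<otimes> r \<in> F")
      case True
      have "cmod (g (act r x)) ^ 2 \<le> M ^ 2" using M by (intro power_mono) auto
      then show ?thesis using True unfolding Pr[OF rc] h_def
        by (simp add: norm_mult power_mult_distrib mult.commute mult_right_mono)
    qed (simp add: Pr[OF rc])
  qed
  also have "\<dots> = M\<^sup>2 * (\<Sum>r\<in>R'. h (inv s \<otimes> r))"
    unfolding sum_distrib_left[symmetric] R'_def using R by (simp add: sum.inter_filter)
  also have "\<dots> = M\<^sup>2 * (\<Sum>t\<in>(\<lambda>r. inv s \<otimes> r) ` R'. h t)"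
    by (simp add: sum.reindex[OF inj])
  also have "\<dots> \<le> M\<^sup>2 * (\<Sum>t\<in>F. h t)"
    by (intro mult_left_mono sum_mono2) (auto simp: F R'_def h_def)
  also have "\<dots> \<le> M\<^sup>2" by (rule mult_left_le) (use xi in \<open>auto simp: h_def\<close>)
  finally have "(Qn ?g x F \<xi> R)\<^sup>2 \<le> M\<^sup>2" .
  then show "Qn ?g x F \<xi> R \<le> M" using M0 by (rule power2_le_imp_le)
qed

lemma cp_fin_bounded:
  assumes cpt: "compact (UNIV :: 'x set)" and b: "cp_fin G b"
  shows "bounded' b"
proof -
  define S where "S = {s. b s \<noteq> (\<lambda>_. 0)}"
  have fS: "finite S" and cont: "\<And>s. continuous_on UNIV (b s)" and out: "\<And>s. s \<notin> carrier G \<Longrightarrow> b s = (\<lambda>_. 0)"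
    using b by (auto simp: cp_fin_def S_def)
  have SC: "S \<subseteq> carrier G" using out S_def by auto
  have "\<exists>M. \<forall>y. cmod (b s y) \<le> M" for s
  proof -
    have "compact (b s ` UNIV)" by (rule compact_continuous_image[OF cont cpt])
    then have "bounded (b s ` UNIV)" by (rule compact_imp_bounded)
    then show ?thesis by (auto simp: bounded_iff)
  qed
  then obtain M where M: "\<And>s y. cmod (b s y) \<le> M s" by metis
  have eq: "b = (\<lambda>u y. \<Sum>s\<in>S. (if u = s then b s y else 0))"
  proof (intro ext)
    fix u y
    show "b u y = (\<Sum>s\<in>S. (if u = s then b s y else 0))"
    proof (cases "u \<in> S")
      case False then show ?thesis using fS by (auto simp: S_def)
    qed (use fS in simp)
  qed
  have "bnd (\<lambda>u y. \<Sum>s\<in>S. (if u = s then b s y else 0)) (\<Sum>s\<in>S. M s)"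
    using fS SC by (intro bnd_sum single_bnd M) auto
  then show ?thesis unfolding bounded'_def eq[symmetric] by blast
qed

lemma gen_apply_lin:
  assumes fI: "finite I"
  shows "gen_apply G act I s f (\<lambda>u y. c1 * p u y + c2 * q u y)
    = (\<lambda>u y. c1 * gen_apply G act I s f p u y + c2 * gen_apply G act I s f q u y)"
  unfolding gen_apply_def infsum_finite[OF fI]
  by (intro ext) (simp add: sum_distrib_left sum.distrib algebra_simps)

lemma cpE_iff: "cp_E G a = (\<lambda>_ _. 0) \<longleftrightarrow> a \<one> = (\<lambda>_. 0)"
  unfolding cp_E_def by (auto simp: fun_eq_iff)

lemma gen_apply_E:
  assumes "a \<one> = (\<lambda>_. 0)" and "\<And>i. i \<in> I \<Longrightarrow> s i \<in> carrier G"
  shows "gen_apply G act I s f a \<one> = (\<lambda>_. 0)"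
  unfolding gen_apply_def using assms by (intro ext) (simp add: infsum_0)

lemma gen_apply_out: "u \<notin> carrier G \<Longrightarrow> gen_apply G act I s f a u = (\<lambda>_. 0)"
  unfolding gen_apply_def by auto

lemma gen_apply_fin:
  assumes gp: "gen_prob G I s f" and fI: "finite I" and b: "cp_fin G b"
  shows "cp_fin G (gen_apply G act I s f b)"
proof -
  have sI: "\<And>i. i \<in> I \<Longrightarrow> s i \<in> carrier G" and fc: "\<And>i. i \<in> I \<Longrightarrow> continuous_on UNIV (f i)"
    using gp by (auto simp: gen_prob_def)
  have fS: "finite {v. b v \<noteq> (\<lambda>_. 0)}" and cont: "\<And>v. continuous_on UNIV (b v)"
    and out: "\<And>v. v \<notin> carrier G \<Longrightarrow> b v = (\<lambda>_. 0)"
    using b by (auto simp: cp_fin_def)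
  let ?m = "gen_apply G act I s f b"
  have "{u. ?m u \<noteq> (\<lambda>_. 0)} \<subseteq> (\<Union>i\<in>I. (\<lambda>v. s i \<otimes> v \<otimes> inv (s i)) ` {v. b v \<noteq> (\<lambda>_. 0)})"
  proof
    fix u assume "u \<in> {u. ?m u \<noteq> (\<lambda>_. 0)}"
    then have mu: "?m u \<noteq> (\<lambda>_. 0)" by simp
    then have uc: "u \<in> carrier G" using gen_apply_out by blast
    have "\<exists>i\<in>I. b (inv (s i) \<otimes> u \<otimes> s i) \<noteq> (\<lambda>_. 0)"
    proof (rule ccontr)
      assume "\<not> ?thesis"
      then have "\<forall>i\<in>I. b (inv (s i) \<otimes> u \<otimes> s i) = (\<lambda>_. 0)" by blast
      then have "?m u = (\<lambda>_. 0)" unfolding gen_apply_def by (intro ext) (auto simp: uc fI intro!: sum.neutral)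
      with mu show False by simp
    qed
    then obtain i where i: "i \<in> I" and bi: "b (inv (s i) \<otimes> u \<otimes> s i) \<noteq> (\<lambda>_. 0)" by blast
    have "u = s i \<otimes> (inv (s i) \<otimes> u \<otimes> s i) \<otimes> inv (s i)"
      using sI[OF i] uc by (simp add: m_assoc g2)
    then show "u \<in> (\<Union>i\<in>I. (\<lambda>v. s i \<otimes> v \<otimes> inv (s i)) ` {v. b v \<noteq> (\<lambda>_. 0)})"
      using i bi by blast
  qed
  then have fin: "finite {u. ?m u \<noteq> (\<lambda>_. 0)}"
    by (rule finite_subset) (use fI fS in auto)
  have "continuous_on UNIV (?m u)" for u
  proof (cases "u \<in> carrier G")
    case True
    have "continuous_on UNIV (\<lambda>x. \<Sum>i\<in>I. complex_of_real (f i x) * b (inv (s i) \<otimes> u \<otimes> s i) (act (inv (s i)) x)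
             * complex_of_real (f i (act (inv u) x)))"
    proof (intro continuous_on_sum continuous_on_mult)
      fix i assume i: "i \<in> I"
      show "continuous_on UNIV (\<lambda>x. complex_of_real (f i x))" using fc[OF i] by simp
      show "continuous_on UNIV (\<lambda>x. b (inv (s i) \<otimes> u \<otimes> s i) (act (inv (s i)) x))"
        by (rule continuous_on_compose2[OF cont act_cont]) (use sI[OF i] in auto)
      have "continuous_on UNIV (\<lambda>x. f i (act (inv u) x))"
        by (rule continuous_on_compose2[OF fc[OF i] act_cont]) (use True in auto)
      then show "continuous_on UNIV (\<lambda>x. complex_of_real (f i (act (inv u) x)))" by simp
    qed
    then show ?thesis unfolding gen_apply_def infsum_finite[OF fI] using True by simp
  next
    case False then show ?thesis unfolding gen_apply_out[OF False] by simp
  qed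
  then show ?thesis unfolding cp_fin_def using fin gen_apply_out by blast
qed

end


context cpset begin

lemma diff_lin: "(\<lambda>s y. a s y - b s y) = (\<lambda>u y. 1 * a u y + (-1) * b u y :: complex)"
  by (simp add: fun_eq_iff)

lemma app_CP:
  assumes cpt: "compact (UNIV :: 'x set)" and gp: "gen_prob G I s f" and fI: "finite I"
    and a: "a \<in> crossed_product G act" and ab: "bounded' a"
  shows "gen_apply G act I s f a \<in> crossed_product G act"
proof -
  obtain b where bf: "\<And>n. cp_fin G (b n)" and lim: "(\<lambda>n. cp_norm G act (\<lambda>s y. a s y - b n s y)) \<longlonglongrightarrow> 0"
    using a unfolding crossed_product_def by blast
  let ?m = "gen_apply G act I s f"
  have le: "cp_norm G act (\<lambda>s y. ?m a s y - ?m (b n) s y) \<le> cp_norm G act (\<lambda>s y. a s y - b n s y)"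
    and ge: "0 \<le> cp_norm G act (\<lambda>s y. ?m a s y - ?m (b n) s y)" for n
  proof -
    obtain B1 where B1: "bnd a B1" using ab bounded'_def by blast
    obtain B2 where B2: "bnd (b n) B2" using cp_fin_bounded[OF cpt bf] bounded'_def by blast
    have "bounded' (\<lambda>s y. a s y - b n s y)"
      unfolding diff_lin bounded'_def using bnd_lin[OF B1 B2] by blast
    then have d: "bnd (\<lambda>s y. a s y - b n s y) (cp_norm G act (\<lambda>s y. a s y - b n s y))"
      by (rule bnd_cp_norm)
    have "bnd (?m (\<lambda>s y. a s y - b n s y)) (cp_norm G act (\<lambda>s y. a s y - b n s y))"
      by (rule contr[OF gp fI d])
    also have "?m (\<lambda>s y. a s y - b n s y) = (\<lambda>s y. ?m a s y - ?m (b n) s y)"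
      unfolding diff_lin gen_apply_lin[OF fI] by simp
    finally have bb: "bnd (\<lambda>s y. ?m a s y - ?m (b n) s y) (cp_norm G act (\<lambda>s y. a s y - b n s y))" .
    show "cp_norm G act (\<lambda>s y. ?m a s y - ?m (b n) s y) \<le> cp_norm G act (\<lambda>s y. a s y - b n s y)"
      by (rule cp_norm_le[OF bb])
    have "bounded' (\<lambda>s y. ?m a s y - ?m (b n) s y)" using bb bounded'_def by blast
    then show "0 \<le> cp_norm G act (\<lambda>s y. ?m a s y - ?m (b n) s y)"
      using bnd_cp_norm bnd_nonneg by blast
  qed
  have "(\<lambda>n. cp_norm G act (\<lambda>s y. ?m a s y - ?m (b n) s y)) \<longlonglongrightarrow> 0"
    by (rule real_tendsto_sandwich[OF _ _ tendsto_const lim]) (use le ge in auto)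
  moreover have "\<forall>n. cp_fin G (?m (b n))" using gen_apply_fin[OF gp fI bf] by blast
  ultimately have "\<exists>b'. (\<forall>n. cp_fin G (b' n)) \<and> (\<lambda>n. cp_norm G act (\<lambda>s y. ?m a s y - b' n s y)) \<longlonglongrightarrow> 0"
    by (intro exI[of _ "\<lambda>n. ?m (b n)"]) simp
  then show ?thesis unfolding crossed_product_def using gen_apply_out by blast
qed

lemma CP_bounded:
  assumes cpt: "compact (UNIV :: 'x set)" and cU: "Sup (UNIV::real set) \<noteq> 0"
    and a: "a \<in> crossed_product G act"
  shows "bounded' a"
proof -
  obtain b where bf: "\<And>n. cp_fin G (b n)" and lim: "(\<lambda>n. cp_norm G act (\<lambda>s y. a s y - b n s y)) \<longlonglongrightarrow> 0"
    using a unfolding crossed_product_def by blast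
  have "\<bar>Sup (UNIV::real set)\<bar> > 0" using cU by simp
  from tendstoD[OF lim this] obtain N where "dist (cp_norm G act (\<lambda>s y. a s y - b N s y)) 0 < \<bar>Sup (UNIV::real set)\<bar>"
    by (auto simp: eventually_sequentially)
  then have "cp_norm G act (\<lambda>s y. a s y - b N s y) \<noteq> Sup (UNIV::real set)" by auto
  then have "bounded' (\<lambda>s y. a s y - b N s y)" using cp_norm_unb by blast
  then obtain B1 where B1: "bnd (\<lambda>s y. a s y - b N s y) B1" using bounded'_def by blast
  obtain B2 where B2: "bnd (b N) B2" using cp_fin_bounded[OF cpt bf] bounded'_def by blast
  have "bnd (\<lambda>u y. (a u y - b N u y) + b N u y) (B1 + B2)" by (rule bnd_add[OF B1 B2])
  then show ?thesis unfolding bounded'_def by auto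
qed

lemma gen_apply_in: "u \<in> carrier G \<Longrightarrow> finite I \<Longrightarrow> gen_apply G act I s f a u x =
  (\<Sum>i\<in>I. complex_of_real (f i x) * a (inv (s i) \<otimes> u \<otimes> s i) (act (inv (s i)) x) * complex_of_real (f i (act (inv u) x)))"
  unfolding gen_apply_def by simp

lemma act_ss: "s \<in> carrier G \<Longrightarrow> act s (act (inv s) x) = x"
  by (simp add: actm act_one)

lemma c1: "s \<in> carrier G \<Longrightarrow> t \<in> carrier G \<Longrightarrow> u \<in> carrier G \<Longrightarrow>
  inv (s \<otimes> t) \<otimes> u \<otimes> (s \<otimes> t) = inv t \<otimes> (inv s \<otimes> u \<otimes> s) \<otimes> t"
  by (simp add: inv_mult_group m_assoc)

lemma c2: "s \<in> carrier G \<Longrightarrow> t \<in> carrier G \<Longrightarrow> act (inv (s \<otimes> t)) x = act (inv t) (act (inv s) x)"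
  by (simp add: inv_mult_group actm)

lemma c3: "s \<in> carrier G \<Longrightarrow> u \<in> carrier G \<Longrightarrow>
  act (inv (inv s \<otimes> u \<otimes> s)) (act (inv s) x) = act (inv s) (act (inv u) x)"
proof -
  assume s: "s \<in> carrier G" and u: "u \<in> carrier G"
  have "inv (inv s \<otimes> u \<otimes> s) \<otimes> inv s = inv s \<otimes> inv u"
    using s u by (simp add: inv_mult_group m_assoc)
  then show ?thesis using s u by (simp add: actm)
qed

definition hf where "hf s1 f1 f2 i j = (\<lambda>x. f1 i x * f2 j (act (inv (s1 i)) x))"
definition Ic where "Ic I1 s1 f1 I2 f2 = {k. \<exists>i\<in>I1. \<exists>j\<in>I2. k = prod_encode (i, j) \<and> hf s1 f1 f2 i j \<noteq> (\<lambda>_. 0)}"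
definition sc where "sc s1 s2 k = s1 (fst (prod_decode k)) \<otimes> s2 (snd (prod_decode k))"
definition fc where "fc s1 f1 f2 k = hf s1 f1 f2 (fst (prod_decode k)) (snd (prod_decode k))"

lemma Ic_sub: "Ic I1 s1 f1 I2 f2 \<subseteq> prod_encode ` (I1 \<times> I2)"
  unfolding Ic_def by auto

lemma Ic_fin: "finite I1 \<Longrightarrow> finite I2 \<Longrightarrow> finite (Ic I1 s1 f1 I2 f2)"
  by (rule finite_subset[OF Ic_sub]) auto

lemma sum_Ic:
  assumes fI1: "finite I1" and fI2: "finite I2"
    and z: "\<And>i j. i \<in> I1 \<Longrightarrow> j \<in> I2 \<Longrightarrow> hf s1 f1 f2 i j = (\<lambda>_. 0) \<Longrightarrow> g (prod_encode (i, j)) = 0"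
  shows "(\<Sum>k\<in>Ic I1 s1 f1 I2 f2. g k) = (\<Sum>i\<in>I1. \<Sum>j\<in>I2. g (prod_encode (i, j)))"
proof -
  have inj: "inj_on prod_encode (I1 \<times> I2)" using inj_prod_encode by (auto simp: inj_on_def)
  have "(\<Sum>k\<in>Ic I1 s1 f1 I2 f2. g k) = (\<Sum>k\<in>prod_encode ` (I1 \<times> I2). g k)"
  proof (rule sum.mono_neutral_left)
    show "finite (prod_encode ` (I1 \<times> I2))" using fI1 fI2 by auto
    show "Ic I1 s1 f1 I2 f2 \<subseteq> prod_encode ` (I1 \<times> I2)" by (rule Ic_sub)
    show "\<forall>k\<in>prod_encode ` (I1 \<times> I2) - Ic I1 s1 f1 I2 f2. g k = 0"
      using z unfolding Ic_def by auto
  qed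
  also have "\<dots> = (\<Sum>p\<in>I1 \<times> I2. g (prod_encode p))" by (simp add: sum.reindex[OF inj])
  also have "\<dots> = (\<Sum>i\<in>I1. \<Sum>j\<in>I2. g (prod_encode (i, j)))" by (simp add: sum.cartesian_product)
  finally show ?thesis .
qed

lemma comp_gp:
  assumes g1: "gen_prob G I1 s1 f1" and fI1: "finite I1" and g2: "gen_prob G I2 s2 f2" and fI2: "finite I2"
  shows "gen_prob G (Ic I1 s1 f1 I2 f2) (sc s1 s2) (fc s1 f1 f2)"
proof -
  have sI1: "\<And>i. i \<in> I1 \<Longrightarrow> s1 i \<in> carrier G" and fc1: "\<And>i. i \<in> I1 \<Longrightarrow> continuous_on UNIV (f1 i)"
    and fn1: "\<And>i x. i \<in> I1 \<Longrightarrow> f1 i x \<ge> 0"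
    using g1 by (auto simp: gen_prob_def)
  have sI2: "\<And>i. i \<in> I2 \<Longrightarrow> s2 i \<in> carrier G" and fc2: "\<And>i. i \<in> I2 \<Longrightarrow> continuous_on UNIV (f2 i)"
    and fn2: "\<And>i x. i \<in> I2 \<Longrightarrow> f2 i x \<ge> 0"
    using g2 by (auto simp: gen_prob_def)
  have part1: "sc s1 s2 k \<in> carrier G \<and> continuous_on UNIV (fc s1 f1 f2 k) \<and> (\<forall>x. fc s1 f1 f2 k x \<ge> 0)
     \<and> fc s1 f1 f2 k \<noteq> (\<lambda>_. 0)" if k: "k \<in> Ic I1 s1 f1 I2 f2" for k
  proof -
    obtain i j where i: "i \<in> I1" and j: "j \<in> I2" and kk: "k = prod_encode (i, j)" and nz: "hf s1 f1 f2 i j \<noteq> (\<lambda>_. 0)"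
      using k unfolding Ic_def by blast
    have "continuous_on UNIV (\<lambda>x. f2 j (act (inv (s1 i)) x))"
      by (rule continuous_on_compose2[OF fc2[OF j] act_cont]) (use sI1[OF i] in auto)
    then have "continuous_on UNIV (hf s1 f1 f2 i j)"
      unfolding hf_def by (intro continuous_on_mult fc1[OF i])
    then show ?thesis using i j nz sI1 sI2 fn1 fn2 unfolding sc_def fc_def kk hf_def by auto
  qed
  have "((\<lambda>k. (fc s1 f1 f2 k x)\<^sup>2) has_sum 1) (Ic I1 s1 f1 I2 f2)" for x
  proof (rule has_sum_finiteI[OF Ic_fin[OF fI1 fI2]])
    have "(\<Sum>k\<in>Ic I1 s1 f1 I2 f2. (fc s1 f1 f2 k x)\<^sup>2) = (\<Sum>i\<in>I1. \<Sum>j\<in>I2. (fc s1 f1 f2 (prod_encode (i, j)) x)\<^sup>2)"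
      by (rule sum_Ic[OF fI1 fI2]) (simp add: fc_def)
    also have "\<dots> = (\<Sum>i\<in>I1. (f1 i x)\<^sup>2 * (\<Sum>j\<in>I2. (f2 j (act (inv (s1 i)) x))\<^sup>2))"
      by (simp add: fc_def hf_def power_mult_distrib sum_distrib_left)
    also have "\<dots> = 1" using gp_sum1[OF g2 fI2] gp_sum1[OF g1 fI1] by simp
    finally show "1 = (\<Sum>k\<in>Ic I1 s1 f1 I2 f2. (fc s1 f1 f2 k x)\<^sup>2)" by simp
  qed
  then show ?thesis unfolding gen_prob_def using part1 by blast
qed

lemma comp_apply:
  assumes g1: "gen_prob G I1 s1 f1" and fI1: "finite I1" and g2: "gen_prob G I2 s2 f2" and fI2: "finite I2"
  shows "gen_apply G act (Ic I1 s1 f1 I2 f2) (sc s1 s2) (fc s1 f1 f2) a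
       = gen_apply G act I1 s1 f1 (gen_apply G act I2 s2 f2 a)"
proof (intro ext)
  fix u x
  have sI1: "\<And>i. i \<in> I1 \<Longrightarrow> s1 i \<in> carrier G" using g1 by (auto simp: gen_prob_def)
  have sI2: "\<And>i. i \<in> I2 \<Longrightarrow> s2 i \<in> carrier G" using g2 by (auto simp: gen_prob_def)
  show "gen_apply G act (Ic I1 s1 f1 I2 f2) (sc s1 s2) (fc s1 f1 f2) a u x
       = gen_apply G act I1 s1 f1 (gen_apply G act I2 s2 f2 a) u x"
  proof (cases "u \<in> carrier G")
    case False then show ?thesis by (simp add: gen_apply_def)
  next
    case u: True
    let ?T = "\<lambda>k. complex_of_real (fc s1 f1 f2 k x) * a (inv (sc s1 s2 k) \<otimes> u \<otimes> sc s1 s2 k) (act (inv (sc s1 s2 k)) x)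
        * complex_of_real (fc s1 f1 f2 k (act (inv u) x))"
    have "gen_apply G act (Ic I1 s1 f1 I2 f2) (sc s1 s2) (fc s1 f1 f2) a u x = (\<Sum>k\<in>Ic I1 s1 f1 I2 f2. ?T k)"
      unfolding gen_apply_def infsum_finite[OF Ic_fin[OF fI1 fI2]] using u by simp
    also have "\<dots> = (\<Sum>i\<in>I1. \<Sum>j\<in>I2. ?T (prod_encode (i, j)))"
      by (rule sum_Ic[OF fI1 fI2]) (simp add: fc_def)
    also have "\<dots> = gen_apply G act I1 s1 f1 (gen_apply G act I2 s2 f2 a) u x"
      unfolding gen_apply_in[OF u fI1]
    proof (rule sum.cong[OF refl])
      fix i assume i: "i \<in> I1"
      have vc: "inv (s1 i) \<otimes> u \<otimes> s1 i \<in> carrier G" using i sI1 u by simp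
      show "(\<Sum>j\<in>I2. ?T (prod_encode (i, j))) =
        complex_of_real (f1 i x) * gen_apply G act I2 s2 f2 a (inv (s1 i) \<otimes> u \<otimes> s1 i) (act (inv (s1 i)) x) *
          complex_of_real (f1 i (act (inv u) x))"
        unfolding gen_apply_in[OF vc fI2] sum_distrib_left sum_distrib_right
      proof (rule sum.cong[OF refl])
        fix j assume j: "j \<in> I2"
        show "?T (prod_encode (i, j)) = complex_of_real (f1 i x) *
          (complex_of_real (f2 j (act (inv (s1 i)) x)) *
              a (inv (s2 j) \<otimes> (inv (s1 i) \<otimes> u \<otimes> s1 i) \<otimes> s2 j) (act (inv (s2 j)) (act (inv (s1 i)) x)) *
              complex_of_real (f2 j (act (inv (inv (s1 i) \<otimes> u \<otimes> s1 i)) (act (inv (s1 i)) x)))) *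
          complex_of_real (f1 i (act (inv u) x))"
          using sI1[OF i] sI2[OF j] u
          by (simp add: sc_def fc_def hf_def c1 c2 c3 act_ss mult_ac)
      qed
    qed
    finally show ?thesis .
  qed
qed

end


context cpset begin

definition Im :: "nat set \<Rightarrow> nat set" where "Im I = insert 0 (Suc ` I)"
definition smx :: "(nat \<Rightarrow> 'g) \<Rightarrow> nat \<Rightarrow> 'g" where "smx s k = (if k = 0 then \<one> else s (k - 1))"
definition fmx :: "real \<Rightarrow> (nat \<Rightarrow> 'x \<Rightarrow> real) \<Rightarrow> nat \<Rightarrow> 'x \<Rightarrow> real" where
  "fmx \<delta> f k = (if k = 0 then (\<lambda>_. sqrt \<delta>) else (\<lambda>x. sqrt (1 - \<delta>) * f (k - 1) x))"

lemma sum_Im: "finite I \<Longrightarrow> (\<Sum>k\<in>Im I. g k) = g 0 + (\<Sum>i\<in>I. g (Suc i))"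
  unfolding Im_def by (simp add: sum.reindex)

lemma mix_gp:
  assumes gp: "gen_prob G I s f" and fI: "finite I" and d: "0 < \<delta>" "\<delta> < 1"
  shows "gen_prob G (Im I) (smx s) (fmx \<delta> f)"
proof -
  have sI: "\<And>i. i \<in> I \<Longrightarrow> s i \<in> carrier G" and fc: "\<And>i. i \<in> I \<Longrightarrow> continuous_on UNIV (f i)"
    and fn: "\<And>i x. i \<in> I \<Longrightarrow> f i x \<ge> 0" and nz: "\<And>i. i \<in> I \<Longrightarrow> f i \<noteq> (\<lambda>_. 0)"
    using gp by (auto simp: gen_prob_def)
  have p1: "smx s k \<in> carrier G \<and> continuous_on UNIV (fmx \<delta> f k) \<and> (\<forall>x. fmx \<delta> f k x \<ge> 0) \<and> fmx \<delta> f k \<noteq> (\<lambda>_. 0)"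
    if k: "k \<in> Im I" for k
  proof (cases "k = 0")
    case True then show ?thesis using d by (auto simp: smx_def fmx_def fun_eq_iff)
  next
    case False
    then obtain i where i: "i \<in> I" and kk: "k = Suc i" using k by (auto simp: Im_def)
    obtain y where "f i y \<noteq> 0" using nz[OF i] by (auto simp: fun_eq_iff)
    then have "fmx \<delta> f k \<noteq> (\<lambda>_. 0)" using d by (auto simp: fmx_def kk fun_eq_iff)
    moreover have "continuous_on UNIV (fmx \<delta> f k)" unfolding fmx_def kk
      by (simp add: continuous_on_mult continuous_on_const fc[OF i])
    ultimately show ?thesis using sI[OF i] fn[OF i] d by (auto simp: smx_def fmx_def kk)
  qed
  have "((\<lambda>k. (fmx \<delta> f k x)\<^sup>2) has_sum 1) (Im I)" for x
  proof (rule has_sum_finiteI)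
    show "finite (Im I)" using fI by (simp add: Im_def)
    have "(\<Sum>k\<in>Im I. (fmx \<delta> f k x)\<^sup>2) = \<delta> + (\<Sum>i\<in>I. (1 - \<delta>) * (f i x)\<^sup>2)"
      using d by (simp add: sum_Im[OF fI] fmx_def power_mult_distrib)
    also have "\<dots> = 1" using gp_sum1[OF gp fI] by (simp add: sum_distrib_left[symmetric])
    finally show "1 = (\<Sum>k\<in>Im I. (fmx \<delta> f k x)\<^sup>2)" by simp
  qed
  then show ?thesis unfolding gen_prob_def using p1 by blast
qed

lemma mix_apply:
  assumes fI: "finite I" and d: "0 < \<delta>" "\<delta> < 1" and out: "\<And>u. u \<notin> carrier G \<Longrightarrow> a u = (\<lambda>_. 0)"
  shows "gen_apply G act (Im I) (smx s) (fmx \<delta> f) a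
    = (\<lambda>u y. complex_of_real (1 - \<delta>) * gen_apply G act I s f a u y + complex_of_real \<delta> * a u y)"
proof (intro ext)
  fix u y
  show "gen_apply G act (Im I) (smx s) (fmx \<delta> f) a u y
    = complex_of_real (1 - \<delta>) * gen_apply G act I s f a u y + complex_of_real \<delta> * a u y"
  proof (cases "u \<in> carrier G")
    case False then show ?thesis using out[OF False] by (simp add: gen_apply_def)
  next
    case u: True
    have fIm: "finite (Im I)" using fI by (simp add: Im_def)
    let ?c = "complex_of_real (sqrt \<delta>)" and ?e = "complex_of_real (sqrt (1 - \<delta>))"
    have h1: "?c * ?c = complex_of_real \<delta>" using d by (simp flip: of_real_mult)
    have h2: "?e * ?e = complex_of_real (1 - \<delta>)" using d by (simp flip: of_real_mult)
    have t0: "complex_of_real (fmx \<delta> f 0 y) * a (inv (smx s 0) \<otimes> u \<otimes> smx s 0) (act (inv (smx s 0)) y) *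
        complex_of_real (fmx \<delta> f 0 (act (inv u) y)) = complex_of_real \<delta> * a u y"
    proof -
      have "complex_of_real (fmx \<delta> f 0 y) * a (inv (smx s 0) \<otimes> u \<otimes> smx s 0) (act (inv (smx s 0)) y) *
        complex_of_real (fmx \<delta> f 0 (act (inv u) y)) = (?c * ?c) * a u y"
        using u by (simp add: smx_def fmx_def act_one)
      then show ?thesis using h1 by simp
    qed
    have ts: "complex_of_real (fmx \<delta> f (Suc i) y) * a (inv (smx s (Suc i)) \<otimes> u \<otimes> smx s (Suc i)) (act (inv (smx s (Suc i))) y) *
        complex_of_real (fmx \<delta> f (Suc i) (act (inv u) y))
      = complex_of_real (1 - \<delta>) * (complex_of_real (f i y) * a (inv (s i) \<otimes> u \<otimes> s i) (act (inv (s i)) y) * complex_of_real (f i (act (inv u) y)))" for i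
    proof -
      have "complex_of_real (fmx \<delta> f (Suc i) y) * a (inv (smx s (Suc i)) \<otimes> u \<otimes> smx s (Suc i)) (act (inv (smx s (Suc i))) y) *
        complex_of_real (fmx \<delta> f (Suc i) (act (inv u) y))
        = (?e * ?e) * (complex_of_real (f i y) * a (inv (s i) \<otimes> u \<otimes> s i) (act (inv (s i)) y) * complex_of_real (f i (act (inv u) y)))"
        by (simp add: smx_def fmx_def mult_ac)
      then show ?thesis using h2 by simp
    qed
    show ?thesis
      unfolding gen_apply_in[OF u fIm] gen_apply_in[OF u fI] sum_Im[OF fI] t0 ts sum_distrib_left[symmetric]
      by simp
  qed
qed

lemma subsing_fin: "(\<And>x y. x \<in> B \<Longrightarrow> y \<in> B \<Longrightarrow> x = y) \<Longrightarrow> finite B"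
proof (cases "B = {}")
  case False
  then obtain b where "b \<in> B" by blast
  assume "\<And>x y. x \<in> B \<Longrightarrow> y \<in> B \<Longrightarrow> x = y"
  with \<open>b \<in> B\<close> have "B = {b}" by blast
  then show ?thesis by simp
qed simp

end


context cpset begin

lemma mixsolve:
  fixes d1 d2 m a :: complex assumes "d1 \<noteq> d2"
  shows "a = (1 - d2) / (d1 - d2) * ((1 - d1) * m + d1 * a) + (- (1 - d1)) / (d1 - d2) * ((1 - d2) * m + d2 * a)"
proof -
  have D: "d1 - d2 \<noteq> 0" using assms by simp
  have e: "(1 - d2) * ((1 - d1) * m + d1 * a) + (- (1 - d1)) * ((1 - d2) * m + d2 * a) = (d1 - d2) * a"
    by (simp add: algebra_simps)
  have "(1 - d2) / (d1 - d2) * ((1 - d1) * m + d1 * a) + (- (1 - d1)) / (d1 - d2) * ((1 - d2) * m + d2 * a)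
     = ((1 - d2) * ((1 - d1) * m + d1 * a) + (- (1 - d1)) * ((1 - d2) * m + d2 * a)) / (d1 - d2)"
    by (simp add: add_divide_distrib)
  also have "\<dots> = a" unfolding e using D by simp
  finally show ?thesis by simp
qed

lemma main_loc:
  fixes as :: "nat \<Rightarrow> 'g \<Rightarrow> 'x \<Rightarrow> complex" and n :: nat and \<epsilon> :: real
  assumes cpt: "compact (UNIV :: 'x set)"
    and hyp: "\<forall>a\<in>crossed_product G act. cp_E G a = (\<lambda>_ _. 0) \<longrightarrow>
               (\<forall>e>0. \<exists>(I::nat set) s f. gen_prob_fin G I s f \<and> cp_norm G act (gen_apply G act I s f a) < e)"
    and as_in: "\<forall>i\<in>{1..n}. as i \<in> crossed_product G act \<and> cp_E G (as i) = (\<lambda>_ _. 0)"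
    and eps: "\<epsilon> > 0"
  shows "\<exists>(I::nat set) s f. gen_prob G I s f \<and>
           (\<forall>i\<in>{1..n}. cp_norm G act (gen_apply G act I s f (as i)) < \<epsilon>)"
proof -
  have step: "k \<le> n \<Longrightarrow> \<exists>(I::nat set) s f. gen_prob G I s f \<and> finite I \<and>
     (\<forall>i\<in>{1..k}. bounded' (as i) \<longrightarrow> bnd (gen_apply G act I s f (as i)) (\<epsilon>/2))" for k
  proof (induction k)
    case 0
    have "gen_prob G {0::nat} (\<lambda>_. \<one>) (\<lambda>_ _. 1)"
      unfolding gen_prob_def by (auto intro!: has_sum_finiteI simp: fun_eq_iff)
    then show ?case by fastforce
  next
    case (Suc k)
    then obtain I :: "nat set" and s f where gp: "gen_prob G I s f" and fI: "finite I"
      and H: "\<forall>i\<in>{1..k}. bounded' (as i) \<longrightarrow> bnd (gen_apply G act I s f (as i)) (\<epsilon>/2)" by auto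
    show ?case
    proof (cases "bounded' (as (Suc k))")
      case False
      have "\<forall>i\<in>{1..Suc k}. bounded' (as i) \<longrightarrow> bnd (gen_apply G act I s f (as i)) (\<epsilon>/2)"
      proof (intro ballI impI)
        fix i assume i: "i \<in> {1..Suc k}" and bi: "bounded' (as i)"
        then have "i \<noteq> Suc k" using False by auto
        then show "bnd (gen_apply G act I s f (as i)) (\<epsilon>/2)" using H i bi by auto
      qed
      then show ?thesis using gp fI by blast
    next
      case True
      have ak: "as (Suc k) \<in> crossed_product G act" "cp_E G (as (Suc k)) = (\<lambda>_ _. 0)"
        using as_in Suc.prems by auto
      let ?b = "gen_apply G act I s f (as (Suc k))"
      have bCP: "?b \<in> crossed_product G act" by (rule app_CP[OF cpt gp fI ak(1) True])
      have sI: "\<And>i. i \<in> I \<Longrightarrow> s i \<in> carrier G" using gp by (auto simp: gen_prob_def)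
      have "?b \<one> = (\<lambda>_. 0)" using ak(2) sI by (intro gen_apply_E) (auto simp: cpE_iff)
      then have bE: "cp_E G ?b = (\<lambda>_ _. 0)" by (simp add: cpE_iff)
      obtain B where B: "bnd (as (Suc k)) B" using True bounded'_def by blast
      have bB: "bnd ?b B" by (rule contr[OF gp fI B])
      have "\<epsilon>/2 > 0" using eps by simp
      with hyp bCP bE obtain I' :: "nat set" and s' f' where gp': "gen_prob_fin G I' s' f'"
        and lt: "cp_norm G act (gen_apply G act I' s' f' ?b) < \<epsilon>/2" by blast
      have gp1: "gen_prob G I' s' f'" and fI': "finite I'" using gp' by (auto simp: gen_prob_fin_def)
      have "bounded' (gen_apply G act I' s' f' ?b)" using contr[OF gp1 fI' bB] bounded'_def by blast
      then have "bnd (gen_apply G act I' s' f' ?b) (cp_norm G act (gen_apply G act I' s' f' ?b))"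
        by (rule bnd_cp_norm)
      then have bnew: "bnd (gen_apply G act I' s' f' ?b) (\<epsilon>/2)" using lt bnd_mono less_imp_le by blast
      have gpc: "gen_prob G (Ic I' s' f' I f) (sc s' s) (fc s' f' f)" by (rule comp_gp[OF gp1 fI' gp fI])
      have fIc: "finite (Ic I' s' f' I f)" by (rule Ic_fin[OF fI' fI])
      have "\<forall>i\<in>{1..Suc k}. bounded' (as i) \<longrightarrow> bnd (gen_apply G act (Ic I' s' f' I f) (sc s' s) (fc s' f' f) (as i)) (\<epsilon>/2)"
      proof (intro ballI impI)
        fix i assume i: "i \<in> {1..Suc k}" and bi: "bounded' (as i)"
        show "bnd (gen_apply G act (Ic I' s' f' I f) (sc s' s) (fc s' f' f) (as i)) (\<epsilon>/2)"
          unfolding comp_apply[OF gp1 fI' gp fI]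
        proof (cases "i = Suc k")
          case True then show "bnd (gen_apply G act I' s' f' (gen_apply G act I s f (as i))) (\<epsilon> / 2)"
            using bnew by simp
        next
          case False
          then have "bnd (gen_apply G act I s f (as i)) (\<epsilon>/2)" using H i bi by auto
          then show "bnd (gen_apply G act I' s' f' (gen_apply G act I s f (as i))) (\<epsilon> / 2)"
            by (rule contr[OF gp1 fI'])
        qed
      qed
      then show ?thesis using gpc fIc by blast
    qed
  qed
  obtain I :: "nat set" and s f where gp: "gen_prob G I s f" and fI: "finite I"
    and H: "\<forall>i\<in>{1..n}. bounded' (as i) \<longrightarrow> bnd (gen_apply G act I s f (as i)) (\<epsilon>/2)"
    using step[of n] by auto
  define Bd where "Bd = {i \<in> {1..n}. bounded' (as i)}"
  have "\<forall>i\<in>Bd. \<exists>B. bnd (as i) B" unfolding Bd_def bounded'_def by blast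
  then obtain Bf where Bf: "\<And>i. i \<in> Bd \<Longrightarrow> bnd (as i) (Bf i)" by metis
  define M where "M = (\<Sum>i\<in>Bd. Bf i)"
  have fBd: "finite Bd" unfolding Bd_def by simp
  have Bf0: "\<And>i. i \<in> Bd \<Longrightarrow> 0 \<le> Bf i" using Bf bnd_nonneg by blast
  have M0: "0 \<le> M" unfolding M_def using Bf0 by (simp add: sum_nonneg)
  have bM: "bnd (as i) M" if i: "i \<in> Bd" for i
  proof -
    have "Bf i \<le> M" unfolding M_def by (rule member_le_sum[OF i]) (use Bf0 fBd in auto)
    then show ?thesis using Bf[OF i] bnd_mono by blast
  qed
  define mixed where "mixed \<delta> a = (\<lambda>u y. complex_of_real (1 - \<delta>) * gen_apply G act I s f a u y + complex_of_real \<delta> * a u y)"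
    for \<delta> a
  define bad where "bad j = {\<delta>. 0 < \<delta> \<and> \<delta> < 1 \<and> bounded' (mixed \<delta> (as j))}" for j
  have uniq: "\<delta>1 = \<delta>2" if j: "j \<in> {1..n} - Bd" and d1: "\<delta>1 \<in> bad j" and d2: "\<delta>2 \<in> bad j" for j \<delta>1 \<delta>2
  proof (rule ccontr)
    assume ne: "\<delta>1 \<noteq> \<delta>2"
    obtain B1 where B1: "bnd (mixed \<delta>1 (as j)) B1" using d1 unfolding bad_def bounded'_def by blast
    obtain B2 where B2: "bnd (mixed \<delta>2 (as j)) B2" using d2 unfolding bad_def bounded'_def by blast
    define c1 where "c1 = (1 - complex_of_real \<delta>2) / (complex_of_real \<delta>1 - complex_of_real \<delta>2)"
    define c2 where "c2 = - (1 - complex_of_real \<delta>1) / (complex_of_real \<delta>1 - complex_of_real \<delta>2)"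
    have nz: "complex_of_real \<delta>1 - complex_of_real \<delta>2 \<noteq> 0" using ne by simp
    have nz': "complex_of_real \<delta>1 \<noteq> complex_of_real \<delta>2" using ne by simp
    have eq: "as j = (\<lambda>u y. c1 * mixed \<delta>1 (as j) u y + c2 * mixed \<delta>2 (as j) u y)"
      unfolding mixed_def c1_def c2_def by (intro ext, simp only: of_real_diff of_real_1, rule mixsolve[OF nz'])
    have bl: "bounded' (\<lambda>u y. c1 * mixed \<delta>1 (as j) u y + c2 * mixed \<delta>2 (as j) u y)"
      using bnd_lin[OF B1 B2] unfolding bounded'_def by blast
    have "bounded' (as j)" using bl by (simp only: eq[symmetric])
    then show False using j unfolding Bd_def by auto
  qed
  have finB: "finite (\<Union>j\<in>{1..n} - Bd. bad j)"
    using uniq by (intro finite_UN_I) (auto intro: subsing_fin)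
  define d0 where "d0 = min (1/2) (\<epsilon> / (4 * (M + 1)))"
  have d0: "0 < d0" unfolding d0_def using eps M0 by simp
  have "infinite ({0<..<d0} - (\<Union>j\<in>{1..n} - Bd. bad j))"
    using Diff_infinite_finite[OF finB] d0 by simp
  then obtain \<delta> where "\<delta> \<in> {0<..<d0} - (\<Union>j\<in>{1..n} - Bd. bad j)"
    using infinite_imp_nonempty by blast
  then have dpos: "0 < \<delta>" and dd0: "\<delta> < d0" and nb: "\<And>j. j \<in> {1..n} - Bd \<Longrightarrow> \<delta> \<notin> bad j" by auto
  have d1: "\<delta> < 1" using dd0 unfolding d0_def by simp
  have dM: "\<delta> < \<epsilon> / (4 * (M + 1))" using dd0 unfolding d0_def by simp
  have gpm: "gen_prob G (Im I) (smx s) (fmx \<delta> f)" by (rule mix_gp[OF gp fI dpos d1])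
  have "\<forall>i\<in>{1..n}. cp_norm G act (gen_apply G act (Im I) (smx s) (fmx \<delta> f) (as i)) < \<epsilon>"
  proof
    fix i assume i: "i \<in> {1..n}"
    have out: "\<And>u. u \<notin> carrier G \<Longrightarrow> as i u = (\<lambda>_. 0)" using as_in i by (auto simp: crossed_product_def)
    have eq: "gen_apply G act (Im I) (smx s) (fmx \<delta> f) (as i) = mixed \<delta> (as i)"
      unfolding mixed_def by (rule mix_apply[OF fI dpos d1 out])
    show "cp_norm G act (gen_apply G act (Im I) (smx s) (fmx \<delta> f) (as i)) < \<epsilon>"
      unfolding eq
    proof (cases "bounded' (as i)")
      case True
      then have iB: "i \<in> Bd" using i Bd_def by auto
      have h1: "bnd (gen_apply G act I s f (as i)) (\<epsilon>/2)" using H i True by auto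
      have "bnd (mixed \<delta> (as i)) (cmod (complex_of_real (1 - \<delta>)) * (\<epsilon>/2) + cmod (complex_of_real \<delta>) * M)"
        unfolding mixed_def by (rule bnd_lin[OF h1 bM[OF iB]])
      moreover have "cmod (complex_of_real (1 - \<delta>)) = 1 - \<delta>" "cmod (complex_of_real \<delta>) = \<delta>"
        using dpos d1 by (auto simp only: norm_of_real)
      ultimately have "bnd (mixed \<delta> (as i)) ((1 - \<delta>) * (\<epsilon>/2) + \<delta> * M)" by (simp only:)
      then have le: "cp_norm G act (mixed \<delta> (as i)) \<le> (1 - \<delta>) * (\<epsilon>/2) + \<delta> * M"
        by (rule cp_norm_le)
      have "\<delta> * (4 * (M + 1)) < \<epsilon>" using dM M0 by (simp add: pos_less_divide_eq)
      then have "4 * (\<delta> * M) < \<epsilon>" using dpos by (simp add: algebra_simps)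
      moreover have "(1 - \<delta>) * (\<epsilon>/2) \<le> \<epsilon>/2" using dpos eps by (simp add: algebra_simps)
      ultimately show "cp_norm G act (mixed \<delta> (as i)) < \<epsilon>" using le eps dpos M0
        by linarith
    next
      case False
      have cU: "Sup (UNIV :: real set) = 0"
      proof (rule ccontr)
        assume "Sup (UNIV :: real set) \<noteq> 0"
        then have "bounded' (as i)" using CP_bounded[OF cpt] as_in i by blast
        with False show False by simp
      qed
      have "i \<in> {1..n} - Bd" using i False Bd_def by auto
      then have "\<delta> \<notin> bad i" by (rule nb)
      then have "\<not> bounded' (mixed \<delta> (as i))" unfolding bad_def using dpos d1 by auto
      then show "cp_norm G act (mixed \<delta> (as i)) < \<epsilon>" using cp_norm_unb cU eps by simp
    qed
  qed
  then show ?thesis using gpm by blast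
qed

end

theorem mainTheorem15:
  fixes G :: "'g monoid" and act :: "'g \<Rightarrow> 'x::t2_space \<Rightarrow> 'x"
    and as :: "nat \<Rightarrow> 'g \<Rightarrow> 'x \<Rightarrow> complex" and n :: nat and \<epsilon> :: real
  assumes grp: "group G" and cnt: "countable (carrier G)"
    and cpt: "compact (UNIV :: 'x set)"
    and act_one: "act \<one>\<^bsub>G\<^esub> = id"
    and act_mult: "\<forall>s\<in>carrier G. \<forall>t\<in>carrier G. act (s \<otimes>\<^bsub>G\<^esub> t) = act s \<circ> act t"
    and act_homeo: "\<forall>s\<in>carrier G. homeomorphism UNIV UNIV (act s) (act (inv\<^bsub>G\<^esub> s))"
    and hyp: "\<forall>a\<in>crossed_product G act. cp_E G a = (\<lambda>_ _. 0) \<longrightarrow>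
               (\<forall>e>0. \<exists>(I::nat set) s f. gen_prob_fin G I s f \<and> cp_norm G act (gen_apply G act I s f a) < e)"
    and as_in: "\<forall>i\<in>{1..n}. as i \<in> crossed_product G act \<and> cp_E G (as i) = (\<lambda>_ _. 0)"
    and eps: "\<epsilon> > 0"
  shows "\<exists>(I::nat set) s f. gen_prob G I s f \<and>
           (\<forall>i\<in>{1..n}. cp_norm G act (gen_apply G act I s f (as i)) < \<epsilon>)"
proof -
  interpret cpset G act
    by (intro cpset.intro cpset_axioms.intro grp act_one act_mult act_homeo)
  show ?thesis by (rule main_loc[OF cpt hyp as_in eps])
qed

end
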